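(* Let $X,Y$ be Banach spaces, let $F:X\rightrightarrows Y$ be a closed convex set-valued mapping, let $A\subset X$ be a closed convex set, let $\bar y\in Y$, put $S:=F^{-1}(\bar y)\cap A$, and let $\bar x\in S$. Suppose there exist a closed convex cone $K\subset X$ and a neighborhood $V$ of $\bar x$ such that $S\cap V=(\bar x+K)\cap V$. Then $$\frac{1}{{\rm subreg}_AF(\bar x,\bar y)}=\sup\{\eta>0:\ DF^{-1}(\bar y,\bar x)(\eta_1B_Y)\cap(T(A,\bar x)+\eta_2B_X)\subset T(S,\bar x)+B_X\ \text{for all }\eta_1,\eta_2\ge0\text{ with }\eta_1+\eta_2<\eta\}.$$
   Context: $B_X,B_Y$ are the closed unit balls; $B(x,\delta)$ is the open ball. $F$ closed convex means ${\rm gph}(F)=\{(x,y):y\in F(x)\}$ is closed and convex in $X\times Y$. For a closed convex set $C$ and $a\in C$, the contingent cone $T(C,a)$ is the set of $v$ for which there exist $v_n\to v$, $t_n\to0^+$ with $a+t_nv_n\in C$ for all $n$. For $(x,y)\in{\rm gph}(F)$, $DF^{-1}(y,x)(v):=\{u\in X:(u,v)\in T({\rm gph}(F),(x,y))\}$ and $DF^{-1}(y,x)(W)=\bigcup_{v\in W}DF^{-1}(y,x)(v)$ for $W\subset Y$. ${\rm subreg}_AF(\bar x,\bar y):=\inf\{\tau>0:\exists\delta>0$ such that $d(x,S)\le\tau(d(\bar y,F(x))+d(x,A))$ for all $x\in B(\bar x,\delta)\}$, with $\inf\emptyset=+\infty$, $\sup\emptyset=0$, $1/(+\infty)=0$,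 $1/0=+\infty$. *)

theory Defs
  imports "HOL-Analysis.Analysis"
begin

definition contingent_cone :: "'a::real_normed_vector set \<Rightarrow> 'a \<Rightarrow> 'a set" where
  "contingent_cone C a = {v. \<exists>vn tn. vn \<longlonglongrightarrow> v \<and> tn \<longlonglongrightarrow> 0 \<and> (\<forall>n. tn n > (0::real))
      \<and> (\<forall>n. a + tn n *\<^sub>R vn n \<in> C)}"

text \<open>Coderivative-type object: D F^{-1}(y,x)(W), with F given by its graph G.\<close>
definition DFinv :: "('a::real_normed_vector \<times> 'b::real_normed_vector) set \<Rightarrow> 'b \<Rightarrow> 'a \<Rightarrow> 'b set \<Rightarrow> 'a set" where
  "DFinv G y x W = {u. \<exists>v\<in>W. (u, v) \<in> contingent_cone G (x, y)}"

definition edist_set :: "'a::metric_space \<Rightarrow> 'a set \<Rightarrow> ereal" where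
  "edist_set y C = (if C = {} then \<infinity> else ereal (infdist y C))"

definition msum :: "'a::real_normed_vector set \<Rightarrow> 'a set \<Rightarrow> 'a set" where
  "msum P Q = {p + q | p q. p \<in> P \<and> q \<in> Q}"

definition solset :: "('a \<times> 'b) set \<Rightarrow> 'a set \<Rightarrow> 'b \<Rightarrow> 'a set" where
  "solset G A y = {x. (x, y) \<in> G} \<inter> A"

text \<open>Modulus of subregularity relative to A (inf of empty set = +infinity).\<close>
definition subreg :: "('a::real_normed_vector \<times> 'b::real_normed_vector) set \<Rightarrow> 'a set \<Rightarrow> 'a \<Rightarrow> 'b \<Rightarrow> ereal" where
  "subreg G A xb yb = Inf (ereal ` {\<tau>::real. \<tau> > 0 \<and> (\<exists>\<delta>>0. \<forall>x\<in>ball xb \<delta>.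
      ereal (infdist x (solset G A yb)) \<le> ereal \<tau> * (edist_set yb {y. (x, y) \<in> G} + ereal (infdist x A)))})"

definition sup0 :: "real set \<Rightarrow> ereal" where
  "sup0 E = (if E = {} then 0 else Sup (ereal ` E))"

end

theory Submission
  imports Defs
begin


lemma infdist_approx:
  assumes "A \<noteq> {}" "e > 0"
  shows "\<exists>a\<in>A. dist x a < infdist x A + e"
proof -
  have "infdist x A = (INF a\<in>A. dist x a)" using assms by (simp add: infdist_notempty)
  moreover have "(INF a\<in>A. dist x a) < infdist x A + e" using calculation assms by simp
  ultimately show ?thesis
    using cINF_less_iff[of A "\<lambda>a. dist x a"] assms(1)
    by (meson bdd_belowI2 zero_le_dist)
qed

lemma infdist_geI:
  assumes "A \<noteq> {}" "\<And>a. a \<in> A \<Longrightarrow> c \<le> dist x a"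
  shows "c \<le> infdist x A"
  using assms by (simp add: infdist_notempty cINF_greatest)

lemma cone_infdist_scale:
  fixes K :: "'a::real_normed_vector set"
  assumes "cone K" "K \<noteq> {}" "t > 0"
  shows "t * infdist w K \<le> infdist (t *\<^sub>R w) K"
proof (rule infdist_geI[OF assms(2)])
  fix k assume k: "k \<in> K"
  have "inverse t *\<^sub>R k \<in> K" using assms(1) k assms(3) unfolding cone_def by simp
  hence "infdist w K \<le> dist w (inverse t *\<^sub>R k)" by (rule infdist_le)
  hence "t * infdist w K \<le> t * dist w (inverse t *\<^sub>R k)" using assms(3) by simp
  also have "t * dist w (inverse t *\<^sub>R k) = dist (t *\<^sub>R w) k"
  proof -
    have "t *\<^sub>R w - k = t *\<^sub>R (w - inverse t *\<^sub>R k)" using assms(3) by (simp add: algebra_simps)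
    thus ?thesis using assms(3) by (simp add: dist_norm)
  qed
  finally show "t * infdist w K \<le> dist (t *\<^sub>R w) k" .
qed

lemma convex_in_cone:
  fixes C :: "'a::real_normed_vector set"
  assumes "convex C" "a \<in> C" "c \<in> C" "s > 0"
  shows "s *\<^sub>R (c - a) \<in> contingent_cone C a"
proof -
  define tn where "tn = (\<lambda>n::nat. inverse (s * real (Suc n)))"
  have "tn \<longlonglongrightarrow> 0"
  proof -
    have "(\<lambda>n. inverse s * inverse (real (Suc n))) \<longlonglongrightarrow> inverse s * 0"
      by (intro tendsto_mult tendsto_const LIMSEQ_inverse_real_of_nat)
    thus ?thesis unfolding tn_def by (simp add: mult.commute)
  qed
  moreover have "\<forall>n. tn n > 0" using assms(4) unfolding tn_def by simp
  moreover have "\<forall>n. a + tn n *\<^sub>R (s *\<^sub>R (c - a)) \<in> C"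
  proof
    fix n
    have u: "tn n * s = inverse (real (Suc n))" using assms(4) unfolding tn_def by simp
    have "a + tn n *\<^sub>R (s *\<^sub>R (c - a)) = (1 - inverse (real (Suc n))) *\<^sub>R a + inverse (real (Suc n)) *\<^sub>R c"
      using u by (simp add: algebra_simps)
    moreover have "inverse (real (Suc n)) \<le> 1" by (simp add: field_simps)
    ultimately show "a + tn n *\<^sub>R (s *\<^sub>R (c - a)) \<in> C"
      using assms(1,2,3) by (simp add: convex_alt)
  qed
  ultimately show ?thesis unfolding contingent_cone_def by blast
qed


lemma convex_seg:
  fixes A :: "'a::real_normed_vector set"
  assumes "convex A" "b \<in> A" "b + s *\<^sub>R a \<in> A" "s > 0" "0 \<le> t" "t \<le> s"
  shows "b + t *\<^sub>R a \<in> A"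
proof -
  have "b + t *\<^sub>R a = (1 - t/s) *\<^sub>R b + (t/s) *\<^sub>R (b + s *\<^sub>R a)"
    using assms(4) by (simp add: algebra_simps)
  moreover have "0 \<le> t/s" "t/s \<le> 1" using assms by auto
  ultimately show ?thesis using assms(1,2,3) by (simp add: convex_alt)
qed

lemma le_eps_lemma:
  fixes a b c :: real
  assumes "c > 0" "\<And>e. e > 0 \<Longrightarrow> a \<le> b + e * c"
  shows "a \<le> b"
proof (rule field_le_epsilon)
  fix e :: real assume "e > 0"
  hence "e / c > 0" using assms(1) by simp
  hence "a \<le> b + (e / c) * c" using assms(2) by blast
  thus "a \<le> b + e" using assms(1) by simp
qed

locale setting =
  fixes G :: "('a::banach \<times> 'b::banach) set" and A :: "'a set"
    and yb :: 'b and xb :: 'a and K :: "'a set" and V :: "'a set" and r :: real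
  assumes clG: "closed G" and cvG: "convex G"
    and clA: "closed A" and cvA: "convex A"
    and xbS: "xb \<in> solset G A yb"
    and clK: "closed K" and coK: "cone K"
    and rpos: "r > 0" and ballV: "ball xb r \<subseteq> V"
    and SV: "solset G A yb \<inter> V = ((\<lambda>k. xb + k) ` K) \<inter> V"
begin

abbreviation "S \<equiv> solset G A yb"

lemma zeroK: "0 \<in> K"
proof -
  have "xb \<in> V" using ballV rpos by auto
  hence "xb \<in> (\<lambda>k. xb + k) ` K" using SV xbS by blast
  thus ?thesis by auto
qed

lemma Sne: "S \<noteq> {}" using xbS by auto

lemma inS: "k \<in> K \<Longrightarrow> norm k < r \<Longrightarrow> xb + k \<in> S"
proof -
  assume "k \<in> K" "norm k < r"
  hence "xb + k \<in> V" using ballV by (auto simp: dist_norm)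
  thus "xb + k \<in> S" using SV \<open>k \<in> K\<close> by blast
qed

lemma inK: "xb + d \<in> S \<Longrightarrow> norm d < r \<Longrightarrow> d \<in> K"
proof -
  assume "xb + d \<in> S" "norm d < r"
  hence "xb + d \<in> V" using ballV by (auto simp: dist_norm)
  hence "xb + d \<in> (\<lambda>k. xb + k) ` K" using SV \<open>xb + d \<in> S\<close> by blast
  thus "d \<in> K" by auto
qed

lemma L1:
  assumes "norm (x - xb) \<le> r/2"
  shows "infdist (x - xb) K \<le> infdist x S"
proof (rule infdist_geI[OF Sne])
  fix z assume z: "z \<in> S"
  show "infdist (x - xb) K \<le> dist x z"
  proof (cases "norm (z - xb) < r")
    case True
    hence "z - xb \<in> K" using inK[of "z - xb"] z by simp
    hence "infdist (x - xb) K \<le> dist (x - xb) (z - xb)" by (rule infdist_le)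
    also have "\<dots> = dist x z" by (simp add: dist_norm)
    finally show ?thesis .
  next
    case False
    have "infdist (x - xb) K \<le> dist (x - xb) 0" using zeroK by (rule infdist_le)
    also have "\<dots> = norm (x - xb)" by simp
    also have "\<dots> \<le> dist x z"
    proof -
      have "z - xb = (x - xb) - (x - z)" by simp
      hence "norm (z - xb) \<le> norm (x - xb) + norm (x - z)" by (metis norm_triangle_ineq4)
      thus ?thesis using False assms by (simp add: dist_norm)
    qed
    finally show ?thesis .
  qed
qed

lemma L2:
  assumes "norm (x - xb) < r/3"
  shows "infdist x S \<le> infdist (x - xb) K"
proof (rule field_le_epsilon)
  fix e :: real assume e: "e > 0"
  define e' where "e' = min e (r/3)"
  have e': "e' > 0" "e' \<le> e" "e' \<le> r/3" using e rpos unfolding e'_def by auto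
  obtain k where k: "k \<in> K" "dist (x - xb) k < infdist (x - xb) K + e'"
    using infdist_approx[of K e' "x - xb"] zeroK e' by auto
  have "infdist (x - xb) K \<le> norm (x - xb)" using infdist_le[OF zeroK, of "x - xb"] by simp
  hence "norm k < r"
  proof -
    have "k = (x - xb) - ((x - xb) - k)" by simp
    hence "norm k \<le> norm (x - xb) + norm ((x - xb) - k)" by (metis norm_triangle_ineq4)
    thus ?thesis using k(2) assms e' \<open>infdist (x - xb) K \<le> norm (x - xb)\<close>
      by (simp add: dist_norm)
  qed
  hence "xb + k \<in> S" using inS k(1) by simp
  hence "infdist x S \<le> dist x (xb + k)" by (rule infdist_le)
  also have "\<dots> = dist (x - xb) k" by (simp add: dist_norm algebra_simps)
  finally show "infdist x S \<le> infdist (x - xb) K + e" using k(2) e' by simp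
qed

lemma TK1: "K \<subseteq> contingent_cone S xb"
proof
  fix k assume k: "k \<in> K"
  define tn where "tn = (\<lambda>n::nat. inverse (real (Suc n)) * (r / (2 * (norm k + 1))))"
  have "tn \<longlonglongrightarrow> 0 * (r / (2 * (norm k + 1)))"
    unfolding tn_def by (intro tendsto_mult tendsto_const LIMSEQ_inverse_real_of_nat)
  hence "tn \<longlonglongrightarrow> 0" by simp
  moreover have tp: "\<forall>n. tn n > 0"
  proof
    fix n
    have "0 < 2 * (norm k + 1)" by (smt (verit) norm_ge_zero)
    thus "tn n > 0" unfolding tn_def using rpos by (intro mult_pos_pos divide_pos_pos) auto
  qed
  moreover have "\<forall>n. xb + tn n *\<^sub>R k \<in> S"
  proof
    fix n
    have a: "inverse (real (Suc n)) \<le> 1" by (simp add: inverse_le_1_iff)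
    have b: "r / (2 * (norm k + 1)) * norm k \<le> r/2"
    proof -
      have "norm k / (norm k + 1) \<le> 1" by (smt (verit) divide_le_eq_1 norm_ge_zero)
      hence "r * (norm k / (norm k + 1)) \<le> r" using rpos using mult_left_le[of "norm k / (norm k + 1)" r] by linarith
      moreover have "norm k + 1 \<noteq> 0" by (smt (verit) norm_ge_zero)
      hence "r / (2 * (norm k + 1)) * norm k = (r * (norm k / (norm k + 1))) / 2"
        by (simp add: field_simps)
      moreover have "r * (norm k / (norm k + 1)) / 2 \<le> r / 2"
        by (rule divide_right_mono[OF \<open>r * (norm k / (norm k + 1)) \<le> r\<close>]) simp
      ultimately show ?thesis by metis
    qed
    have "norm (tn n *\<^sub>R k) = tn n * norm k" using tp by (simp add: less_imp_le)
    also have "\<dots> \<le> r/2"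
    proof -
      have "tn n * norm k = inverse (real (Suc n)) * (r / (2 * (norm k + 1)) * norm k)"
        unfolding tn_def by (simp add: mult.assoc)
      also have "\<dots> \<le> 1 * (r/2)"
        by (rule mult_mono[OF a b]) (use rpos in auto)
      finally show ?thesis by simp
    qed
    finally have "norm (tn n *\<^sub>R k) < r" using rpos by simp
    moreover have "tn n *\<^sub>R k \<in> K" using coK k tp unfolding cone_def by (simp add: less_imp_le)
    ultimately show "xb + tn n *\<^sub>R k \<in> S" using inS by simp
  qed
  ultimately show "k \<in> contingent_cone S xb" unfolding contingent_cone_def
    by (intro CollectI exI[of _ "\<lambda>n. k"] exI[of _ tn]) simp
qed

lemma TK2: "contingent_cone S xb \<subseteq> K"
proof
  fix v assume "v \<in> contingent_cone S xb"
  then obtain vn tn where h: "vn \<longlonglongrightarrow> v" "tn \<longlonglongrightarrow> 0" "\<forall>n. tn n > (0::real)" "\<forall>n. xb + tn n *\<^sub>R vn n \<in> S"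
    unfolding contingent_cone_def by blast
  have "(\<lambda>n. tn n *\<^sub>R vn n) \<longlonglongrightarrow> 0 *\<^sub>R v" using h(1,2) by (intro tendsto_scaleR)
  hence "eventually (\<lambda>n. dist (tn n *\<^sub>R vn n) 0 < r) sequentially"
    using rpos by (metis scale_zero_left tendstoD)
  hence "eventually (\<lambda>n. norm (tn n *\<^sub>R vn n) < r) sequentially"
    by (simp add: dist_norm)
  hence "eventually (\<lambda>n. vn n \<in> K) sequentially"
  proof (rule eventually_mono)
    fix n assume "norm (tn n *\<^sub>R vn n) < r"
    hence "tn n *\<^sub>R vn n \<in> K" using inK h(4) by blast
    moreover have "inverse (tn n) \<ge> 0" using h(3) by (simp add: less_imp_le)
    ultimately have "inverse (tn n) *\<^sub>R (tn n *\<^sub>R vn n) \<in> K" using coK unfolding cone_def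
      by blast
    thus "vn n \<in> K" using h(3) by (simp add: less_imp_neq[symmetric])
  qed
  thus "v \<in> K" using clK h(1) Lim_in_closed_set by (metis trivial_limit_sequentially)
qed

end



context setting begin

lemma D2core:
  assumes cond: "\<forall>\<eta>1 \<eta>2. \<eta>1 \<ge> 0 \<and> \<eta>2 \<ge> 0 \<and> \<eta>1 + \<eta>2 < \<eta> \<longrightarrow>
        DFinv G yb xb (cball 0 \<eta>1) \<inter> msum (contingent_cone A xb) (cball 0 \<eta>2)
          \<subseteq> msum (contingent_cone S xb) (cball 0 1)"
    and e: "0 < \<eta>'" "\<eta>' < \<eta>"
    and x: "norm (x - xb) < r/3" and Fne: "{y. (x, y) \<in> G} \<noteq> {}"
  shows "infdist x S \<le> (infdist yb {y. (x, y) \<in> G} + infdist x A) / \<eta>'"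
proof -
  define \<alpha> where "\<alpha> = infdist yb {y. (x, y) \<in> G}"
  define \<beta> where "\<beta> = infdist x A"
  have main: "infdist (x - xb) K \<le> (\<alpha> + \<beta>) / \<eta>' + \<epsilon> * (2 / \<eta>')" if ep: "\<epsilon> > 0" for \<epsilon>
  proof -
    obtain y where y: "(x, y) \<in> G" "dist yb y < \<alpha> + \<epsilon>"
      using infdist_approx[OF Fne ep, of yb] unfolding \<alpha>_def by auto
    have Ane: "A \<noteq> {}" using xbS unfolding solset_def by auto
    obtain a where a: "a \<in> A" "dist x a < \<beta> + \<epsilon>"
      using infdist_approx[OF Ane ep, of x] unfolding \<beta>_def by auto
    have xbyb: "(xb, yb) \<in> G" and xbA: "xb \<in> A" using xbS unfolding solset_def by auto
    define p where "p = \<alpha> + \<beta> + 2 * \<epsilon>"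
    have "\<alpha> \<ge> 0" "\<beta> \<ge> 0" unfolding \<alpha>_def \<beta>_def by (simp_all add: infdist_nonneg)
    hence pp: "p > 0" unfolding p_def using ep by linarith
    define s where "s = \<eta>' / p"
    have sp: "s > 0" unfolding s_def using pp e by simp
    have "s *\<^sub>R ((x, y) - (xb, yb)) \<in> contingent_cone G (xb, yb)"
      by (rule convex_in_cone[OF cvG xbyb y(1) sp])
    hence c1: "(s *\<^sub>R (x - xb), s *\<^sub>R (y - yb)) \<in> contingent_cone G (xb, yb)" by simp
    define \<eta>1 where "\<eta>1 = s * (\<alpha> + \<epsilon>)"
    define \<eta>2 where "\<eta>2 = s * (\<beta> + \<epsilon>)"
    have n1: "s *\<^sub>R (y - yb) \<in> cball 0 \<eta>1"
    proof -
      have "norm (y - yb) \<le> \<alpha> + \<epsilon>" using y(2) by (simp add: dist_commute dist_norm less_imp_le)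
      hence "s * norm (y - yb) \<le> s * (\<alpha> + \<epsilon>)" using sp by (simp add: mult_left_mono)
      thus ?thesis unfolding \<eta>1_def using sp by (simp add: less_imp_le)
    qed
    have in1: "s *\<^sub>R (x - xb) \<in> DFinv G yb xb (cball 0 \<eta>1)"
      unfolding DFinv_def using c1 n1 by blast
    have ca: "s *\<^sub>R (a - xb) \<in> contingent_cone A xb" by (rule convex_in_cone[OF cvA xbA a(1) sp])
    have n2: "s *\<^sub>R (x - a) \<in> cball 0 \<eta>2"
    proof -
      have "norm (x - a) \<le> \<beta> + \<epsilon>" using a(2) by (simp add: dist_norm less_imp_le)
      hence "s * norm (x - a) \<le> s * (\<beta> + \<epsilon>)" using sp by (simp add: mult_left_mono)
      thus ?thesis unfolding \<eta>2_def using sp by (simp add: less_imp_le)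
    qed
    have "s *\<^sub>R (x - xb) = s *\<^sub>R (a - xb) + s *\<^sub>R (x - a)" by (simp add: algebra_simps)
    hence in2: "s *\<^sub>R (x - xb) \<in> msum (contingent_cone A xb) (cball 0 \<eta>2)"
      unfolding msum_def using ca n2 by blast
    have nn: "\<eta>1 \<ge> 0" "\<eta>2 \<ge> 0" unfolding \<eta>1_def \<eta>2_def using sp ep infdist_nonneg[of yb] infdist_nonneg[of x A]
      unfolding \<alpha>_def \<beta>_def by (simp_all add: add_nonneg_nonneg less_imp_le)
    have "\<eta>1 + \<eta>2 = s * p" unfolding \<eta>1_def \<eta>2_def p_def by (simp add: algebra_simps)
    also have "\<dots> = \<eta>'" unfolding s_def using pp by simp
    finally have "\<eta>1 + \<eta>2 < \<eta>" using e by simp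
    hence sub: "DFinv G yb xb (cball 0 \<eta>1) \<inter> msum (contingent_cone A xb) (cball 0 \<eta>2)
          \<subseteq> msum (contingent_cone S xb) (cball 0 1)"
      using cond[rule_format, of \<eta>1 \<eta>2] nn by simp
    have "s *\<^sub>R (x - xb) \<in> msum (contingent_cone S xb) (cball 0 1)"
      using subsetD[OF sub IntI[OF in1 in2]] .
    then obtain k b where kb: "s *\<^sub>R (x - xb) = k + b" "k \<in> contingent_cone S xb" "b \<in> cball 0 1"
      unfolding msum_def by blast
    have kK: "k \<in> K" using kb(2) TK2 by blast
    hence "inverse s *\<^sub>R k \<in> K" using coK sp unfolding cone_def by (simp add: less_imp_le)
    hence "infdist (x - xb) K \<le> dist (x - xb) (inverse s *\<^sub>R k)" by (rule infdist_le)
    also have "\<dots> = norm (inverse s *\<^sub>R b)"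
    proof -
      have "x - xb = inverse s *\<^sub>R (s *\<^sub>R (x - xb))" using sp by simp
      also have "\<dots> = inverse s *\<^sub>R k + inverse s *\<^sub>R b" using kb(1) by (simp add: scaleR_add_right)
      finally show ?thesis by (simp add: dist_norm)
    qed
    also have "\<dots> \<le> inverse s"
    proof -
      have "norm b \<le> 1" using kb(3) by simp
      hence "inverse s * norm b \<le> inverse s * 1" using sp by (intro mult_left_mono) auto
      thus ?thesis using sp by (simp add: less_imp_le)
    qed
    also have "\<dots> = p / \<eta>'" unfolding s_def by simp
    also have "\<dots> = (\<alpha> + \<beta>) / \<eta>' + \<epsilon> * (2 / \<eta>')" unfolding p_def by (simp add: add_divide_distrib)
    finally show ?thesis .
  qed
  have "infdist (x - xb) K \<le> (\<alpha> + \<beta>) / \<eta>'"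
  proof (rule le_eps_lemma)
    show "0 < 2 / \<eta>'" using e by simp
  next
    fix \<epsilon> :: real assume "\<epsilon> > 0"
    thus "infdist (x - xb) K \<le> (\<alpha> + \<beta>) / \<eta>' + \<epsilon> * (2 / \<eta>')" by (rule main)
  qed
  moreover have "infdist x S \<le> infdist (x - xb) K" by (rule L2[OF x])
  ultimately show ?thesis unfolding \<alpha>_def \<beta>_def by simp
qed

lemma D2:
  assumes cond: "\<forall>\<eta>1 \<eta>2. \<eta>1 \<ge> 0 \<and> \<eta>2 \<ge> 0 \<and> \<eta>1 + \<eta>2 < \<eta> \<longrightarrow>
        DFinv G yb xb (cball 0 \<eta>1) \<inter> msum (contingent_cone A xb) (cball 0 \<eta>2)
          \<subseteq> msum (contingent_cone S xb) (cball 0 1)"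
    and e: "0 < \<eta>'" "\<eta>' < \<eta>"
  shows "\<exists>\<delta>>0. \<forall>x\<in>ball xb \<delta>.
      ereal (infdist x S) \<le> ereal (1/\<eta>') * (edist_set yb {y. (x, y) \<in> G} + ereal (infdist x A))"
proof (intro exI[of _ "r/3"] conjI ballI)
  show "r/3 > 0" using rpos by simp
  fix x assume "x \<in> ball xb (r/3)"
  hence x: "norm (x - xb) < r/3" by (simp add: dist_commute dist_norm)
  show "ereal (infdist x S) \<le> ereal (1/\<eta>') * (edist_set yb {y. (x, y) \<in> G} + ereal (infdist x A))"
  proof (cases "{y. (x, y) \<in> G} = {}")
    case True
    hence "edist_set yb {y. (x, y) \<in> G} = \<infinity>" by (simp add: edist_set_def)
    moreover have "ereal (1/\<eta>') * \<infinity> = \<infinity>" using e by simp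
    ultimately show ?thesis by simp
  next
    case False
    have "infdist x S \<le> (infdist yb {y. (x, y) \<in> G} + infdist x A) / \<eta>'"
      by (rule D2core[OF cond e x False])
    moreover have ed: "edist_set yb {y. (x, y) \<in> G} = ereal (infdist yb {y. (x, y) \<in> G})"
      using False by (simp add: edist_set_def)
    moreover have "ereal (1/\<eta>') * (ereal (infdist yb {y. (x, y) \<in> G}) + ereal (infdist x A))
       = ereal ((infdist yb {y. (x, y) \<in> G} + infdist x A) / \<eta>')" by simp
    ultimately show ?thesis by simp
  qed
qed

end


context setting begin

lemma D1core:
  assumes tau: "\<tau> > 0" and dl: "\<delta> > 0"
    and H: "\<forall>x\<in>ball xb \<delta>.
      ereal (infdist x S) \<le> ereal \<tau> * (edist_set yb {y. (x, y) \<in> G} + ereal (infdist x A))"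
    and n: "\<eta>1 \<ge> 0" "\<eta>2 \<ge> 0"
    and u1: "u \<in> DFinv G yb xb (cball 0 \<eta>1)"
    and u2: "u \<in> msum (contingent_cone A xb) (cball 0 \<eta>2)"
  shows "infdist u K \<le> \<tau> * (\<eta>1 + \<eta>2)"
proof (rule le_eps_lemma)
  show "0 < 1 + 3 * \<tau>" using tau by simp
next
  fix \<epsilon> :: real assume ep: "\<epsilon> > 0"
  obtain v where v: "norm v \<le> \<eta>1" "(u, v) \<in> contingent_cone G (xb, yb)"
    using u1 unfolding DFinv_def by auto
  then obtain wn tn where W: "wn \<longlonglongrightarrow> (u, v)" "tn \<longlonglongrightarrow> 0" "\<forall>n. tn n > (0::real)"
      "\<forall>n. (xb, yb) + tn n *\<^sub>R wn n \<in> G"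
    unfolding contingent_cone_def by blast
  obtain a w where aw: "u = a + w" "a \<in> contingent_cone A xb" "norm w \<le> \<eta>2"
    using u2 unfolding msum_def by auto
  then obtain an sn where AA: "an \<longlonglongrightarrow> a" "sn \<longlonglongrightarrow> 0" "\<forall>n. sn n > (0::real)"
      "\<forall>n. xb + sn n *\<^sub>R an n \<in> A"
    unfolding contingent_cone_def by blast
  obtain N where "\<forall>n\<ge>N. dist (an n) a < \<epsilon>"
    using tendstoD[OF AA(1) ep] by (auto simp: eventually_sequentially)
  then obtain m where m: "dist (an m) a < \<epsilon>" by blast
  define un where "un = (\<lambda>n. fst (wn n))"
  define vn where "vn = (\<lambda>n. snd (wn n))"
  have unl: "un \<longlonglongrightarrow> u" unfolding un_def using tendsto_fst[OF W(1)] by simp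
  have vnl: "vn \<longlonglongrightarrow> v" unfolding vn_def using tendsto_snd[OF W(1)] by simp
  have tul: "(\<lambda>n. tn n *\<^sub>R un n) \<longlonglongrightarrow> 0"
    using tendsto_scaleR[OF W(2) unl] by simp
  have rr: "min \<delta> (r/2) > 0" using dl rpos by simp
  have ev: "eventually (\<lambda>n. tn n \<le> sn m \<and> dist (un n) u < \<epsilon> \<and> dist (vn n) v < \<epsilon>
      \<and> dist (tn n *\<^sub>R un n) 0 < min \<delta> (r/2)) sequentially"
  proof (intro eventually_conj)
    have "eventually (\<lambda>n. dist (tn n) 0 < sn m) sequentially" using tendstoD[OF W(2)] AA(3) by blast
    thus "eventually (\<lambda>n. tn n \<le> sn m) sequentially"
      by (rule eventually_mono) (use W(3) in \<open>auto simp: dist_real_def\<close>)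
    show "eventually (\<lambda>n. dist (un n) u < \<epsilon>) sequentially" using tendstoD[OF unl ep] .
    show "eventually (\<lambda>n. dist (vn n) v < \<epsilon>) sequentially" using tendstoD[OF vnl ep] .
    show "eventually (\<lambda>n. dist (tn n *\<^sub>R un n) 0 < min \<delta> (r/2)) sequentially"
      using tendstoD[OF tul rr] .
  qed
  then obtain n where nn: "tn n \<le> sn m" "dist (un n) u < \<epsilon>" "dist (vn n) v < \<epsilon>"
      "dist (tn n *\<^sub>R un n) 0 < min \<delta> (r/2)"
    using ev unfolding eventually_sequentially by blast
  define t where "t = tn n"
  have tp: "t > 0" unfolding t_def using W(3) by simp
  define x where "x = xb + t *\<^sub>R un n"
  have xG: "(x, yb + t *\<^sub>R vn n) \<in> G" using W(4) unfolding x_def t_def un_def vn_def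
    by (metis (no_types, lifting) add_Pair prod.collapse scaleR_Pair)
  have xball: "x \<in> ball xb \<delta>" using nn(4) unfolding x_def t_def by (simp add: dist_norm)
  have xr: "norm (x - xb) \<le> r/2" using nn(4) unfolding x_def t_def by (simp add: dist_norm)
  have Fne: "{y. (x, y) \<in> G} \<noteq> {}" using xG by auto
  have xbA: "xb \<in> A" using xbS unfolding solset_def by auto
  have aA: "xb + t *\<^sub>R an m \<in> A"
    using convex_seg[OF cvA xbA AA(4)[rule_format, of m] AA(3)[rule_format, of m]] tp nn(1)
    unfolding t_def by simp
  have p1: "infdist yb {y. (x, y) \<in> G} \<le> t * norm (vn n)"
  proof -
    have "infdist yb {y. (x, y) \<in> G} \<le> dist yb (yb + t *\<^sub>R vn n)" using xG by (intro infdist_le) simp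
    also have "\<dots> = t * norm (vn n)" using tp by (simp add: dist_norm)
    finally show ?thesis .
  qed
  have p2: "infdist x A \<le> t * (norm (un n - u) + \<eta>2 + dist (an m) a)"
  proof -
    have "infdist x A \<le> dist x (xb + t *\<^sub>R an m)" using aA by (rule infdist_le)
    also have "\<dots> = t * norm (un n - an m)" unfolding x_def using tp
      by (simp add: dist_norm scaleR_diff_right[symmetric])
    also have "norm (un n - an m) \<le> norm (un n - u) + norm w + norm (a - an m)"
    proof -
      have "un n - an m = (un n - u) + w + (a - an m)" using aw(1) by simp
      thus ?thesis by (metis norm_triangle_ineq order_trans add_right_mono)
    qed
    hence "t * norm (un n - an m) \<le> t * (norm (un n - u) + \<eta>2 + dist (an m) a)"
      using aw(3) tp by (intro mult_left_mono) (auto simp: dist_norm norm_minus_commute)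
    finally show ?thesis .
  qed
  have "ereal (infdist x S) \<le> ereal \<tau> * (edist_set yb {y. (x, y) \<in> G} + ereal (infdist x A))"
    using H xball by blast
  moreover have ed: "edist_set yb {y. (x, y) \<in> G} = ereal (infdist yb {y. (x, y) \<in> G})"
    using Fne unfolding edist_set_def by simp
  ultimately have "ereal (infdist x S) \<le> ereal (\<tau> * (infdist yb {y. (x, y) \<in> G} + infdist x A))"
    by simp
  hence "infdist x S \<le> \<tau> * (infdist yb {y. (x, y) \<in> G} + infdist x A)"
    by simp
  also have "\<dots> \<le> \<tau> * (t * norm (vn n) + t * (norm (un n - u) + \<eta>2 + dist (an m) a))"
    using p1 p2 tau by (intro mult_left_mono) auto
  finally have q1: "infdist x S \<le> \<tau> * (t * norm (vn n) + t * (norm (un n - u) + \<eta>2 + dist (an m) a))" .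
  have "t * infdist (un n) K \<le> infdist (t *\<^sub>R un n) K"
    using cone_infdist_scale[OF coK _ tp] zeroK by blast
  also have "\<dots> \<le> infdist x S" using L1[OF xr] unfolding x_def by simp
  finally have "t * infdist (un n) K \<le> t * (\<tau> * (norm (vn n) + norm (un n - u) + \<eta>2 + dist (an m) a))"
    using q1 by (simp add: algebra_simps)
  hence q2: "infdist (un n) K \<le> \<tau> * (norm (vn n) + norm (un n - u) + \<eta>2 + dist (an m) a)"
    using tp by simp
  have "norm (vn n) \<le> \<eta>1 + \<epsilon>"
  proof -
    have "vn n = v + (vn n - v)" by simp
    hence "norm (vn n) \<le> norm v + norm (vn n - v)" by (metis norm_triangle_ineq)
    thus ?thesis using v(1) nn(3) by (simp add: dist_norm)
  qed
  hence "\<tau> * (norm (vn n) + norm (un n - u) + \<eta>2 + dist (an m) a) \<le> \<tau> * (\<eta>1 + \<epsilon> + \<epsilon> + \<eta>2 + \<epsilon>)"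
    using nn(2) m tau by (intro mult_left_mono) (auto simp: dist_norm)
  moreover have "infdist u K \<le> infdist (un n) K + dist u (un n)" by (rule infdist_triangle)
  moreover have "dist u (un n) < \<epsilon>" using nn(2) by (simp add: dist_commute)
  ultimately show "infdist u K \<le> \<tau> * (\<eta>1 + \<eta>2) + \<epsilon> * (1 + 3 * \<tau>)"
    using q2 by (simp add: algebra_simps)
qed

lemma D1:
  assumes tau: "\<tau> > 0" and dl: "\<delta> > 0"
    and H: "\<forall>x\<in>ball xb \<delta>.
      ereal (infdist x S) \<le> ereal \<tau> * (edist_set yb {y. (x, y) \<in> G} + ereal (infdist x A))"
  shows "\<forall>\<eta>1 \<eta>2. \<eta>1 \<ge> 0 \<and> \<eta>2 \<ge> 0 \<and> \<eta>1 + \<eta>2 < 1/\<tau> \<longrightarrow>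
        DFinv G yb xb (cball 0 \<eta>1) \<inter> msum (contingent_cone A xb) (cball 0 \<eta>2)
          \<subseteq> msum (contingent_cone S xb) (cball 0 1)"
proof (intro allI impI subsetI)
  fix \<eta>1 \<eta>2 u
  assume h: "\<eta>1 \<ge> 0 \<and> \<eta>2 \<ge> 0 \<and> \<eta>1 + \<eta>2 < 1/\<tau>"
    and u: "u \<in> DFinv G yb xb (cball 0 \<eta>1) \<inter> msum (contingent_cone A xb) (cball 0 \<eta>2)"
  have "infdist u K \<le> \<tau> * (\<eta>1 + \<eta>2)"
    using D1core[OF tau dl H, of \<eta>1 \<eta>2 u] h u by blast
  also have "\<dots> < \<tau> * (1/\<tau>)" using h tau by (intro mult_strict_left_mono) auto
  also have "\<dots> = 1" using tau by simp
  finally have lt: "infdist u K < 1" .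
  obtain k where k: "k \<in> K" "dist u k < infdist u K + (1 - infdist u K)"
    using infdist_approx[of K "1 - infdist u K" u] zeroK lt by auto
  have "u = k + (u - k)" by simp
  moreover have "k \<in> contingent_cone S xb" using TK1 k(1) by blast
  moreover have "u - k \<in> cball 0 1" using k(2) by (simp add: dist_norm norm_minus_commute less_imp_le)
  ultimately show "u \<in> msum (contingent_cone S xb) (cball 0 1)" unfolding msum_def by blast
qed

end


lemma abstract_inv:
  fixes T E :: "real set"
  assumes Tp: "\<And>\<tau>. \<tau> \<in> T \<Longrightarrow> \<tau> > 0" and Ep: "\<And>\<eta>. \<eta> \<in> E \<Longrightarrow> \<eta> > 0"
    and TE: "\<And>\<tau>. \<tau> \<in> T \<Longrightarrow> 1/\<tau> \<in> E"
    and ET: "\<And>\<eta> \<eta>'. \<eta> \<in> E \<Longrightarrow> 0 < \<eta>' \<Longrightarrow> \<eta>' < \<eta> \<Longrightarrow> 1/\<eta>' \<in> T"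
  shows "inverse (Inf (ereal ` T)) = sup0 E"
proof (cases "T = {}")
  case True
  have "E = {}"
  proof (rule ccontr)
    assume "E \<noteq> {}"
    then obtain \<eta> where "\<eta> \<in> E" by blast
    hence "1/(\<eta>/2) \<in> T" using ET[of \<eta> "\<eta>/2"] Ep[of \<eta>] by simp
    thus False using True by simp
  qed
  thus ?thesis using True by (simp add: sup0_def top_ereal_def)
next
  case False
  then obtain \<tau>0 where t0: "\<tau>0 \<in> T" by blast
  hence Ene: "E \<noteq> {}" using TE by blast
  define I where "I = Inf (ereal ` T)"
  have I0: "0 \<le> I" unfolding I_def using Tp by (intro Inf_greatest) (auto simp: less_imp_le)
  have "inverse I = Sup (ereal ` E)"
  proof (rule antisym)
    show "inverse I \<le> Sup (ereal ` E)"
    proof (cases "Sup (ereal ` E) = \<infinity>")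
      case True thus ?thesis by simp
    next
      case False
      have ge: "ereal (1/\<tau>0) \<le> Sup (ereal ` E)" using TE[OF t0] by (intro Sup_upper) auto
      have pos: "0 < ereal (1/\<tau>0)" using Tp[OF t0] by simp
      obtain s where s: "Sup (ereal ` E) = ereal s" using False ge pos
        by (cases "Sup (ereal ` E)") auto
      have "1/\<tau>0 \<le> s" using ge s by simp
      moreover have "0 < 1/\<tau>0" using Tp[OF t0] by simp
      ultimately have sp: "s > 0" by linarith
      have "ereal (1/s) \<le> I" unfolding I_def
      proof (rule Inf_greatest)
        fix z assume "z \<in> ereal ` T"
        then obtain \<tau> where \<tau>: "\<tau> \<in> T" "z = ereal \<tau>" by blast
        have "ereal (1/\<tau>) \<le> ereal s" using TE[OF \<tau>(1)] s[symmetric] by (auto intro: Sup_upper)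
        hence "1/\<tau> \<le> s" by simp
        hence "1/s \<le> \<tau>" using Tp[OF \<tau>(1)] sp by (simp add: field_simps)
        thus "ereal (1/s) \<le> z" using \<tau>(2) by simp
      qed
      hence "inverse I \<le> inverse (ereal (1/s))" using sp by (intro ereal_inverse_antimono) auto
      also have "\<dots> = ereal s" using sp by simp
      finally show ?thesis using s by simp
    qed
  next
    show "Sup (ereal ` E) \<le> inverse I"
    proof (rule Sup_least)
      fix z assume "z \<in> ereal ` E"
      then obtain \<eta> where \<eta>: "\<eta> \<in> E" "z = ereal \<eta>" by blast
      have "ereal \<eta> \<le> inverse I"
      proof (rule dense_le_bounded[of 0])
        show "0 < ereal \<eta>" using Ep[OF \<eta>(1)] by simp
      next
        fix w assume w: "0 < w" "w < ereal \<eta>"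
        then obtain \<eta>' where e': "w = ereal \<eta>'" by (cases w) auto
        have "0 < \<eta>'" "\<eta>' < \<eta>" using w e' by auto
        hence "1/\<eta>' \<in> T" using ET[OF \<eta>(1)] by blast
        hence "I \<le> ereal (1/\<eta>')" unfolding I_def by (intro Inf_lower) auto
        hence "inverse (ereal (1/\<eta>')) \<le> inverse I" by (rule ereal_inverse_antimono[OF I0])
        thus "w \<le> inverse I" using e' \<open>0 < \<eta>'\<close> by simp
      qed
      thus "z \<le> inverse I" using \<eta>(2) by simp
    qed
  qed
  thus ?thesis unfolding I_def sup0_def using Ene by simp
qed

theorem theorem3p2:
  fixes G :: "('a::banach \<times> 'b::banach) set" and A :: "'a set"
    and yb :: 'b and xb :: 'a and K :: "'a set" and V :: "'a set"
  assumes "closed G" and "convex G"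
    and "closed A" and "convex A"
    and "xb \<in> solset G A yb"
    and "closed K" and "convex K" and "cone K"
    and "\<exists>U. open U \<and> xb \<in> U \<and> U \<subseteq> V"
    and "solset G A yb \<inter> V = ((\<lambda>k. xb + k) ` K) \<inter> V"
  shows "inverse (subreg G A xb yb) =
    sup0 {\<eta>::real. \<eta> > 0 \<and> (\<forall>\<eta>1 \<eta>2. \<eta>1 \<ge> 0 \<and> \<eta>2 \<ge> 0 \<and> \<eta>1 + \<eta>2 < \<eta> \<longrightarrow>
        DFinv G yb xb (cball 0 \<eta>1) \<inter> msum (contingent_cone A xb) (cball 0 \<eta>2)
          \<subseteq> msum (contingent_cone (solset G A yb) xb) (cball 0 1))}"
proof -
  obtain U where U: "open U" "xb \<in> U" "U \<subseteq> V" using assms(9) by blast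
  obtain r where r: "r > 0" "ball xb r \<subseteq> U" using U open_contains_ball by blast
  interpret setting G A yb xb K V r
    using assms r U by unfold_locales auto
  show ?thesis unfolding subreg_def
  proof (rule abstract_inv)
    fix \<tau> assume "\<tau> \<in> {\<tau>::real. \<tau> > 0 \<and> (\<exists>\<delta>>0. \<forall>x\<in>ball xb \<delta>.
      ereal (infdist x (solset G A yb)) \<le> ereal \<tau> * (edist_set yb {y. (x, y) \<in> G} + ereal (infdist x A)))}"
    then obtain \<delta> where h: "\<tau> > 0" "\<delta> > 0" "\<forall>x\<in>ball xb \<delta>.
      ereal (infdist x (solset G A yb)) \<le> ereal \<tau> * (edist_set yb {y. (x, y) \<in> G} + ereal (infdist x A))"
      by blast
    thus "\<tau> > 0" by simp
    show "1/\<tau> \<in> {\<eta>::real. \<eta> > 0 \<and> (\<forall>\<eta>1 \<eta>2. \<eta>1 \<ge> 0 \<and> \<eta>2 \<ge> 0 \<and> \<eta>1 + \<eta>2 < \<eta> \<longrightarrow>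
        DFinv G yb xb (cball 0 \<eta>1) \<inter> msum (contingent_cone A xb) (cball 0 \<eta>2)
          \<subseteq> msum (contingent_cone (solset G A yb) xb) (cball 0 1))}"
      using D1[OF h] h(1) by simp
  next
    fix \<eta> assume "\<eta> \<in> {\<eta>::real. \<eta> > 0 \<and> (\<forall>\<eta>1 \<eta>2. \<eta>1 \<ge> 0 \<and> \<eta>2 \<ge> 0 \<and> \<eta>1 + \<eta>2 < \<eta> \<longrightarrow>
        DFinv G yb xb (cball 0 \<eta>1) \<inter> msum (contingent_cone A xb) (cball 0 \<eta>2)
          \<subseteq> msum (contingent_cone (solset G A yb) xb) (cball 0 1))}"
    thus "\<eta> > 0" by simp
  next
    fix \<eta> \<eta>' assume h: "\<eta> \<in> {\<eta>::real. \<eta> > 0 \<and> (\<forall>\<eta>1 \<eta>2. \<eta>1 \<ge> 0 \<and> \<eta>2 \<ge> 0 \<and> \<eta>1 + \<eta>2 < \<eta> \<longrightarrow>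
        DFinv G yb xb (cball 0 \<eta>1) \<inter> msum (contingent_cone A xb) (cball 0 \<eta>2)
          \<subseteq> msum (contingent_cone (solset G A yb) xb) (cball 0 1))}"
      and e: "0 < \<eta>'" "\<eta>' < \<eta>"
    have "\<exists>\<delta>>0. \<forall>x\<in>ball xb \<delta>.
      ereal (infdist x (solset G A yb)) \<le> ereal (1/\<eta>') * (edist_set yb {y. (x, y) \<in> G} + ereal (infdist x A))"
      using D2[OF _ e] h by blast
    thus "1/\<eta>' \<in> {\<tau>::real. \<tau> > 0 \<and> (\<exists>\<delta>>0. \<forall>x\<in>ball xb \<delta>.
      ereal (infdist x (solset G A yb)) \<le> ereal \<tau> * (edist_set yb {y. (x, y) \<in> G} + ereal (infdist x A)))}"
      using e by simp
  qed
qed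


end
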